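(* Let $\Omega$ be a finite set, $(H_i\mid i\in\Omega)$ finite abelian groups, $h_i=|H_i|$, $\mathbf{H}=\prod_{i\in\Omega}H_i$, and $\mathbf{P}=(\Omega,\preccurlyeq_{\mathbf{P}})$ a poset. Let $\alpha\in\hat{\mathbf{H}}$ with $\langle\mathrm{supp}(\alpha)\rangle_{\overline{\mathbf{P}}}=D$. Then $$F(\alpha)=\sum_{I\in\mathcal{I}(\mathbf{P}),\ I\subseteq(\Omega-D)\cup\min_{\mathbf{P}}(D)}(-1)^{|I\cap D|}\Big(\prod_{i\in I-\max_{\mathbf{P}}(I)}h_i\Big)\Big(\prod_{i\in\max_{\mathbf{P}}(I)-\min_{\mathbf{P}}(D)}(h_i-1)\Big)x^{|I|}.$$
   Context: $\hat{\mathbf{H}}$ is the character group of $\mathbf{H}$, identified with $\prod_i\hat{H_i}$ via $\alpha(\beta)=\prod_i\alpha_{(i)}(\beta_{(i)})$; $\mathrm{supp}$ of a codeword is the set of coordinates where it is not the identity. $\mathcal{I}(\mathbf{P})$ is the set of ideals (down-closed subsets) of $\mathbf{P}$; $\max_{\mathbf{P}}(B)$, $\min_{\mathbf{P}}(B)$ are the sets of maximal, minimal elements of $B$ w.r.t. $\preccurlyeq_{\mathbf{P}}$. For a poset $\mathbf{Q}$ on $\Omega$, $\langle B\rangle_{\mathbf{Q}}$ is the down-closure of $B$ in $\mathbf{Q}$, $\mathrm{wt}_{\mathbf{Q}}(\beta)=|\langle\mathrm{supp}(\beta)\rangle_{\mathbf{Q}}|$. $\overline{\mathbf{P}}$ is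 the dual poset. With $n=|\Omega|$, $F(\alpha)=\sum_{l=0}^{n}\big(\sum_{\beta\in\mathbf{H},\ \mathrm{wt}_{\mathbf{P}}(\beta)=l}\alpha(\beta)\big)x^l$. *)

theory Defs
  imports "HOL-Algebra.Group" "HOL-Computational_Algebra.Polynomial"
begin

definition poset_on :: "'i set \<Rightarrow> ('i \<Rightarrow> 'i \<Rightarrow> bool) \<Rightarrow> bool" where
  "poset_on \<Omega> leq \<longleftrightarrow>
     (\<forall>i\<in>\<Omega>. leq i i) \<and>
     (\<forall>i\<in>\<Omega>. \<forall>j\<in>\<Omega>. leq i j \<and> leq j i \<longrightarrow> i = j) \<and>
     (\<forall>i\<in>\<Omega>. \<forall>j\<in>\<Omega>. \<forall>k\<in>\<Omega>. leq i j \<and> leq j k \<longrightarrow> leq i k)"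

definition dual_rel :: "('i \<Rightarrow> 'i \<Rightarrow> bool) \<Rightarrow> 'i \<Rightarrow> 'i \<Rightarrow> bool" where
  "dual_rel leq = (\<lambda>i j. leq j i)"

definition down_closure :: "'i set \<Rightarrow> ('i \<Rightarrow> 'i \<Rightarrow> bool) \<Rightarrow> 'i set \<Rightarrow> 'i set" where
  "down_closure \<Omega> leq B = {j\<in>\<Omega>. \<exists>b\<in>B. leq j b}"

definition ideals :: "'i set \<Rightarrow> ('i \<Rightarrow> 'i \<Rightarrow> bool) \<Rightarrow> 'i set set" where
  "ideals \<Omega> leq = {I. I \<subseteq> \<Omega> \<and> (\<forall>i\<in>I. \<forall>j\<in>\<Omega>. leq j i \<longrightarrow> j \<in> I)}"

definition maxs :: "('i \<Rightarrow> 'i \<Rightarrow> bool) \<Rightarrow> 'i set \<Rightarrow> 'i set" where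
  "maxs leq B = {i\<in>B. \<not> (\<exists>j\<in>B. j \<noteq> i \<and> leq i j)}"

definition mins :: "('i \<Rightarrow> 'i \<Rightarrow> bool) \<Rightarrow> 'i set \<Rightarrow> 'i set" where
  "mins leq B = {i\<in>B. \<not> (\<exists>j\<in>B. j \<noteq> i \<and> leq j i)}"

definition character :: "('a, 'b) monoid_scheme \<Rightarrow> ('a \<Rightarrow> complex) \<Rightarrow> bool" where
  "character G \<chi> \<longleftrightarrow>
     (\<forall>x\<in>carrier G. norm (\<chi> x) = 1) \<and>
     (\<forall>x\<in>carrier G. \<forall>y\<in>carrier G. \<chi> (x \<otimes>\<^bsub>G\<^esub> y) = \<chi> x * \<chi> y)"

definition prod_carrier :: "'i set \<Rightarrow> ('i \<Rightarrow> ('a, 'b) monoid_scheme) \<Rightarrow> ('i \<Rightarrow> 'a) set" where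
  "prod_carrier \<Omega> G = (\<Pi>\<^sub>E i\<in>\<Omega>. carrier (G i))"

definition supp_word :: "'i set \<Rightarrow> ('i \<Rightarrow> ('a, 'b) monoid_scheme) \<Rightarrow> ('i \<Rightarrow> 'a) \<Rightarrow> 'i set" where
  "supp_word \<Omega> G \<beta> = {i\<in>\<Omega>. \<beta> i \<noteq> \<one>\<^bsub>G i\<^esub>}"

definition supp_char :: "'i set \<Rightarrow> ('i \<Rightarrow> ('a, 'b) monoid_scheme) \<Rightarrow> ('i \<Rightarrow> 'a \<Rightarrow> complex) \<Rightarrow> 'i set" where
  "supp_char \<Omega> G \<alpha> = {i\<in>\<Omega>. \<exists>x\<in>carrier (G i). \<alpha> i x \<noteq> 1}"

definition char_eval :: "'i set \<Rightarrow> ('i \<Rightarrow> 'a \<Rightarrow> complex) \<Rightarrow> ('i \<Rightarrow> 'a) \<Rightarrow> complex" where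
  "char_eval \<Omega> \<alpha> \<beta> = (\<Prod>i\<in>\<Omega>. \<alpha> i (\<beta> i))"

definition wtP :: "'i set \<Rightarrow> ('i \<Rightarrow> 'i \<Rightarrow> bool) \<Rightarrow> ('i \<Rightarrow> ('a, 'b) monoid_scheme) \<Rightarrow> ('i \<Rightarrow> 'a) \<Rightarrow> nat" where
  "wtP \<Omega> leq G \<beta> = card (down_closure \<Omega> leq (supp_word \<Omega> G \<beta>))"

definition F_poly :: "'i set \<Rightarrow> ('i \<Rightarrow> 'i \<Rightarrow> bool) \<Rightarrow> ('i \<Rightarrow> ('a, 'b) monoid_scheme)
    \<Rightarrow> ('i \<Rightarrow> 'a \<Rightarrow> complex) \<Rightarrow> complex poly" where
  "F_poly \<Omega> leq G \<alpha> =
     (\<Sum>l = 0..card \<Omega>. monom (\<Sum>\<beta>\<in>{\<beta>\<in>prod_carrier \<Omega> G. wtP \<Omega> leq G \<beta> = l}. char_eval \<Omega> \<alpha> \<beta>) l)"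

end

theory Submission
  imports Defs "HOL-Library.FuncSet"
begin

lemma char_one:
  assumes "group G" "character G \<chi>"
  shows "\<chi> \<one>\<^bsub>G\<^esub> = 1"
proof -
  interpret group G by fact
  have "\<chi> \<one>\<^bsub>G\<^esub> = \<chi> \<one>\<^bsub>G\<^esub> * \<chi> \<one>\<^bsub>G\<^esub>" using assms(2) unfolding character_def
    by (metis one_closed r_one)
  moreover have "\<chi> \<one>\<^bsub>G\<^esub> \<noteq> 0" using assms(2) unfolding character_def
    by (metis norm_zero one_closed zero_neq_one)
  ultimately show ?thesis by (metis mult_cancel_left1)
qed

lemma char_sum:
  assumes "group G" "finite (carrier G)" "character G \<chi>"
  shows "(\<Sum>x\<in>carrier G. \<chi> x) = (if \<forall>x\<in>carrier G. \<chi> x = 1 then of_nat (card (carrier G)) else 0)"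
proof (cases "\<forall>x\<in>carrier G. \<chi> x = 1")
  case True then show ?thesis by simp
next
  case False
  interpret group G by fact
  obtain g where g: "g \<in> carrier G" "\<chi> g \<noteq> 1" using False by blast
  have inj: "inj_on (\<lambda>x. g \<otimes>\<^bsub>G\<^esub> x) (carrier G)" using g(1) by (auto simp: inj_on_def)
  have img: "(\<lambda>x. g \<otimes>\<^bsub>G\<^esub> x) ` carrier G = carrier G"
  proof
    show "(\<lambda>x. g \<otimes>\<^bsub>G\<^esub> x) ` carrier G \<subseteq> carrier G" using g(1) by auto
    show "carrier G \<subseteq> (\<lambda>x. g \<otimes>\<^bsub>G\<^esub> x) ` carrier G"
    proof
      fix y assume y: "y \<in> carrier G"
      have "y = g \<otimes>\<^bsub>G\<^esub> (inv\<^bsub>G\<^esub> g \<otimes>\<^bsub>G\<^esub> y)" using g(1) y by (simp add: m_assoc[symmetric])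
      then show "y \<in> (\<lambda>x. g \<otimes>\<^bsub>G\<^esub> x) ` carrier G" using g(1) y by blast
    qed
  qed
  have "(\<Sum>x\<in>carrier G. \<chi> x) = (\<Sum>x\<in>carrier G. \<chi> (g \<otimes>\<^bsub>G\<^esub> x))"
    using sum.reindex[OF inj, of \<chi>] img by simp
  also have "\<dots> = \<chi> g * (\<Sum>x\<in>carrier G. \<chi> x)"
    using assms(3) g(1) unfolding character_def by (simp add: sum_distrib_left)
  finally have "(1 - \<chi> g) * (\<Sum>x\<in>carrier G. \<chi> x) = 0" by (simp add: algebra_simps)
  then show ?thesis using g False by auto
qed

lemma exists_max:
  assumes "poset_on \<Omega> leq" "finite \<Omega>" "I \<subseteq> \<Omega>" "i \<in> I"
  shows "\<exists>m\<in>maxs leq I. leq i m"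
proof -
  define T where "T = {j\<in>I. leq i j}"
  define f where "f j = card {k\<in>I. leq k j}" for j
  have "T \<subseteq> \<Omega>" using assms(3) unfolding T_def by blast
  then have fin: "finite T" using assms(2) finite_subset by blast
  have ne: "i \<in> T" using assms unfolding T_def poset_on_def by blast
  have "Max (f ` T) \<in> f ` T" using Max_in[of "f ` T"] fin ne by blast
  then obtain m where m: "m \<in> T" "f m = Max (f ` T)" by (metis imageE)
  have "m \<in> maxs leq I"
  proof (rule ccontr)
    assume "m \<notin> maxs leq I"
    then obtain j where j: "j \<in> I" "j \<noteq> m" "leq m j" using m(1) unfolding maxs_def T_def by auto
    have "j \<in> T" using j m(1) assms unfolding T_def poset_on_def by blast
    have sub: "{k\<in>I. leq k m} \<subset> {k\<in>I. leq k j}"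
    proof
      show "{k\<in>I. leq k m} \<subseteq> {k\<in>I. leq k j}"
        using j m(1) assms unfolding T_def poset_on_def by blast
      have "j \<notin> {k\<in>I. leq k m}" using j m(1) assms unfolding T_def poset_on_def by blast
      moreover have "j \<in> {k\<in>I. leq k j}" using j assms unfolding poset_on_def by blast
      ultimately show "{k\<in>I. leq k m} \<noteq> {k\<in>I. leq k j}" by blast
    qed
    have "{k\<in>I. leq k j} \<subseteq> \<Omega>" using assms(3) by blast
    then have "finite {k\<in>I. leq k j}" using assms(2) finite_subset by blast
    then have "f m < f j" unfolding f_def using psubset_card_mono[OF _ sub] by simp
    moreover have "f j \<le> f m" using m(2) fin \<open>j \<in> T\<close> by simp
    ultimately show False by simp
  qed
  then show ?thesis using m(1) unfolding T_def by blast
qed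

lemma dc_eq_iff:
  assumes "poset_on \<Omega> leq" "finite \<Omega>" "I \<in> ideals \<Omega> leq" "B \<subseteq> \<Omega>"
  shows "down_closure \<Omega> leq B = I \<longleftrightarrow> B \<subseteq> I \<and> maxs leq I \<subseteq> B"
proof
  assume eq: "down_closure \<Omega> leq B = I"
  have "B \<subseteq> I" using eq assms unfolding down_closure_def poset_on_def by blast
  moreover have "maxs leq I \<subseteq> B"
  proof
    fix m assume m: "m \<in> maxs leq I"
    then obtain b where b: "b \<in> B" "leq m b" using eq unfolding maxs_def down_closure_def by blast
    have "b \<in> I" using b \<open>B \<subseteq> I\<close> by blast
    then have "b = m" using m b(2) unfolding maxs_def by blast
    then show "m \<in> B" using b by simp
  qed
  ultimately show "B \<subseteq> I \<and> maxs leq I \<subseteq> B" by blast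
next
  assume h: "B \<subseteq> I \<and> maxs leq I \<subseteq> B"
  have IO: "I \<subseteq> \<Omega>" using assms(3) unfolding ideals_def by blast
  show "down_closure \<Omega> leq B = I"
  proof
    show "down_closure \<Omega> leq B \<subseteq> I" using h assms(3) unfolding down_closure_def ideals_def by blast
    show "I \<subseteq> down_closure \<Omega> leq B"
    proof
      fix i assume i: "i \<in> I"
      obtain m where "m \<in> maxs leq I" "leq i m" using exists_max[OF assms(1,2) IO i] by blast
      then show "i \<in> down_closure \<Omega> leq B" using h i IO unfolding down_closure_def by blast
    qed
  qed
qed


lemma dc_ideal:
  assumes po: "poset_on \<Omega> leq" and BO: "B \<subseteq> \<Omega>"
  shows "down_closure \<Omega> leq B \<in> ideals \<Omega> leq"
proof -
  have "\<forall>i\<in>{j\<in>\<Omega>. \<exists>b\<in>B. leq j b}. \<forall>j\<in>\<Omega>. leq j i \<longrightarrow> j \<in> {j\<in>\<Omega>. \<exists>b\<in>B. leq j b}"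
  proof (intro ballI impI)
    fix i j assume i: "i \<in> {j\<in>\<Omega>. \<exists>b\<in>B. leq j b}" and j: "j \<in> \<Omega>" "leq j i"
    then obtain b where b: "b \<in> B" "leq i b" by blast
    have "i \<in> \<Omega>" "b \<in> \<Omega>" using i b BO by auto
    then have "leq j b" using po j b unfolding poset_on_def by blast
    then show "j \<in> {j\<in>\<Omega>. \<exists>b\<in>B. leq j b}" using j b by blast
  qed
  then show ?thesis unfolding ideals_def down_closure_def by auto
qed

lemma E1:
  assumes po: "poset_on \<Omega> leq" and I: "I \<in> ideals \<Omega> leq" and SO: "S \<subseteq> \<Omega>"
    and Ddef: "D = {j\<in>\<Omega>. \<exists>b\<in>S. leq b j}" and e: "(I - maxs leq I) \<inter> S = {}"
  shows "I \<subseteq> (\<Omega> - D) \<union> mins leq D"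
proof
  fix i assume i: "i \<in> I"
  have iO: "i \<in> \<Omega>" using I i unfolding ideals_def by blast
  show "i \<in> (\<Omega> - D) \<union> mins leq D"
  proof (cases "i \<in> D")
    case False then show ?thesis using iO by blast
  next
    case True
    then obtain s where s: "s \<in> S" "leq s i" using Ddef by blast
    have sI: "s \<in> I" using I s SO i unfolding ideals_def by blast
    have smax: "s \<in> maxs leq I" using e s(1) sI by blast
    have "\<not> (\<exists>j\<in>D. j \<noteq> i \<and> leq j i)"
    proof
      assume "\<exists>j\<in>D. j \<noteq> i \<and> leq j i"
      then obtain j where j: "j \<in> D" "j \<noteq> i" "leq j i" by blast
      then obtain s' where s': "s' \<in> S" "leq s' j" using Ddef by blast
      have jO: "j \<in> \<Omega>" using j Ddef by blast
      have s'O: "s' \<in> \<Omega>" using s' SO by blast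
      have "leq s' i" using po s' j jO s'O iO unfolding poset_on_def by blast
      have "s' \<in> I" using I s'O \<open>leq s' i\<close> i unfolding ideals_def by blast
      then have "s' \<in> maxs leq I" using e s'(1) by blast
      then have "s' = i" using \<open>leq s' i\<close> i unfolding maxs_def by auto
      then show False using s'(2) j po jO iO unfolding poset_on_def by blast
    qed
    then have "i \<in> mins leq D" using True unfolding mins_def by blast
    then show ?thesis by blast
  qed
qed

lemma E2:
  assumes po: "poset_on \<Omega> leq" and I: "I \<in> ideals \<Omega> leq" and SO: "S \<subseteq> \<Omega>"
    and Ddef: "D = {j\<in>\<Omega>. \<exists>b\<in>S. leq b j}" and sub: "I \<subseteq> (\<Omega> - D) \<union> mins leq D"
  shows "(I - maxs leq I) \<inter> S = {}" "I \<inter> D = maxs leq I \<inter> S"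
    "maxs leq I - mins leq D = maxs leq I - S"
proof -
  have IO: "I \<subseteq> \<Omega>" using I unfolding ideals_def by blast
  have SD: "S \<subseteq> D" using SO po unfolding Ddef poset_on_def by blast
  have minsS: "mins leq D \<subseteq> S"
  proof
    fix i assume i: "i \<in> mins leq D"
    then have "i \<in> D" unfolding mins_def by blast
    then obtain s where s: "s \<in> S" "leq s i" using Ddef by blast
    have "s \<in> D" using s SD by blast
    then have "s = i" using i s(2) unfolding mins_def by blast
    then show "i \<in> S" using s by simp
  qed
  have up: "\<And>i j. i \<in> D \<Longrightarrow> j \<in> \<Omega> \<Longrightarrow> leq i j \<Longrightarrow> j \<in> D"
  proof -
    fix i j assume a: "i \<in> D" "j \<in> \<Omega>" "leq i j"
    then obtain s where s: "s \<in> S" "leq s i" using Ddef by blast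
    have "i \<in> \<Omega>" "s \<in> \<Omega>" using a s SO Ddef by auto
    then have "leq s j" using po a s unfolding poset_on_def by blast
    then show "j \<in> D" using a s Ddef by blast
  qed
  show 1: "(I - maxs leq I) \<inter> S = {}"
  proof (rule ccontr)
    assume "(I - maxs leq I) \<inter> S \<noteq> {}"
    then obtain i where i: "i \<in> I" "i \<notin> maxs leq I" "i \<in> S" by blast
    then obtain j where j: "j \<in> I" "j \<noteq> i" "leq i j" unfolding maxs_def by blast
    have "i \<in> D" using i SD by blast
    have "j \<in> D" using up[OF \<open>i \<in> D\<close> _ j(3)] j IO by blast
    then have "j \<in> mins leq D" using sub j by blast
    then show False using \<open>i \<in> D\<close> j unfolding mins_def by auto
  qed
  show "I \<inter> D = maxs leq I \<inter> S"
  proof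
    show "I \<inter> D \<subseteq> maxs leq I \<inter> S"
    proof
      fix i assume i: "i \<in> I \<inter> D"
      then have "i \<in> mins leq D" using sub by blast
      then have "i \<in> S" using minsS by blast
      then show "i \<in> maxs leq I \<inter> S" using 1 i by blast
    qed
    show "maxs leq I \<inter> S \<subseteq> I \<inter> D" using SD unfolding maxs_def by blast
  qed
  show "maxs leq I - mins leq D = maxs leq I - S"
  proof -
    have "\<And>i. i \<in> maxs leq I \<Longrightarrow> i \<in> mins leq D \<longleftrightarrow> i \<in> S"
    proof -
      fix i assume i: "i \<in> maxs leq I"
      then have "i \<in> I" unfolding maxs_def by blast
      then show "i \<in> mins leq D \<longleftrightarrow> i \<in> S" using minsS SD sub by blast
    qed
    then show ?thesis by blast
  qed
qed


theorem theorem2p1: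
  fixes \<Omega> :: "'i set"
    and G :: "'i \<Rightarrow> ('a, 'b) monoid_scheme"
    and leq :: "'i \<Rightarrow> 'i \<Rightarrow> bool"
    and \<alpha> :: "'i \<Rightarrow> 'a \<Rightarrow> complex"
    and D :: "'i set"
  assumes "finite \<Omega>"
    and "\<And>i. i \<in> \<Omega> \<Longrightarrow> comm_group (G i)"
    and "\<And>i. i \<in> \<Omega> \<Longrightarrow> finite (carrier (G i))"
    and "poset_on \<Omega> leq"
    and "\<And>i. i \<in> \<Omega> \<Longrightarrow> character (G i) (\<alpha> i)"
    and "down_closure \<Omega> (dual_rel leq) (supp_char \<Omega> G \<alpha>) = D"
  shows "F_poly \<Omega> leq G \<alpha> =
    (\<Sum>I\<in>{I\<in>ideals \<Omega> leq. I \<subseteq> (\<Omega> - D) \<union> mins leq D}.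
       monom ((-1) ^ card (I \<inter> D)
              * (\<Prod>i\<in>I - maxs leq I. of_nat (card (carrier (G i))))
              * (\<Prod>i\<in>maxs leq I - mins leq D. of_nat (card (carrier (G i))) - 1))
             (card I))"
proof -
  note fin = assms(1) and po = assms(4)
  define H where "H = prod_carrier \<Omega> G"
  define S where "S = supp_char \<Omega> G \<alpha>"
  define ce where "ce = char_eval \<Omega> \<alpha>"
  define wt where "wt = wtP \<Omega> leq G"
  define dcs where "dcs \<beta> = down_closure \<Omega> leq (supp_word \<Omega> G \<beta>)" for \<beta>
  have grp: "\<And>i. i \<in> \<Omega> \<Longrightarrow> group (G i)" using assms(2) comm_group_def by blast
  have finH: "finite H" unfolding H_def prod_carrier_def using assms(1,3) by (intro finite_PiE) auto
  have SO: "S \<subseteq> \<Omega>" unfolding S_def supp_char_def by blast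
  have Ddef: "D = {j\<in>\<Omega>. \<exists>b\<in>S. leq b j}"
    using assms(6) unfolding S_def down_closure_def dual_rel_def by auto
  have wt_le: "\<And>\<beta>. wt \<beta> \<le> card \<Omega>"
    unfolding wt_def wtP_def down_closure_def by (rule card_mono[OF fin]) auto
  have finId: "finite (ideals \<Omega> leq)"
  proof -
    have "ideals \<Omega> leq \<subseteq> Pow \<Omega>" unfolding ideals_def by blast
    then show ?thesis using fin finite_subset by blast
  qed
  have dcs_id: "\<And>\<beta>. dcs \<beta> \<in> ideals \<Omega> leq"
    unfolding dcs_def by (rule dc_ideal[OF po]) (auto simp: supp_word_def)
  have wt_dcs: "\<And>\<beta>. wt \<beta> = card (dcs \<beta>)" unfolding wt_def wtP_def dcs_def by simp

  have A: "F_poly \<Omega> leq G \<alpha> = (\<Sum>\<beta>\<in>H. monom (ce \<beta>) (wt \<beta>))"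
  proof -
    have "F_poly \<Omega> leq G \<alpha> = (\<Sum>l = 0..card \<Omega>. \<Sum>\<beta>\<in>{\<beta>\<in>H. wt \<beta> = l}. monom (ce \<beta>) (wt \<beta>))"
      unfolding F_poly_def monom_sum H_def ce_def wt_def by (intro sum.cong refl) auto
    also have "\<dots> = (\<Sum>\<beta>\<in>H. monom (ce \<beta>) (wt \<beta>))"
      by (rule sum.group) (use finH wt_le in auto)
    finally show ?thesis .
  qed
  also have B: "\<dots> = (\<Sum>I\<in>ideals \<Omega> leq. monom (\<Sum>\<beta>\<in>{\<beta>\<in>H. dcs \<beta> = I}. ce \<beta>) (card I))"
  proof -
    have "(\<Sum>I\<in>ideals \<Omega> leq. monom (\<Sum>\<beta>\<in>{\<beta>\<in>H. dcs \<beta> = I}. ce \<beta>) (card I))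
        = (\<Sum>I\<in>ideals \<Omega> leq. \<Sum>\<beta>\<in>{\<beta>\<in>H. dcs \<beta> = I}. monom (ce \<beta>) (wt \<beta>))"
      unfolding monom_sum by (intro sum.cong refl) (auto simp: wt_dcs)
    also have "\<dots> = (\<Sum>\<beta>\<in>H. monom (ce \<beta>) (wt \<beta>))"
      by (rule sum.group) (use finH finId dcs_id in auto)
    finally show ?thesis by simp
  qed
  also have C: "\<dots> = (\<Sum>I\<in>ideals \<Omega> leq. monom (if (I - maxs leq I) \<inter> S = {} then
        (-1) ^ card (maxs leq I \<inter> S)
              * (\<Prod>i\<in>I - maxs leq I. of_nat (card (carrier (G i))))
              * (\<Prod>i\<in>maxs leq I - S. of_nat (card (carrier (G i))) - 1) else 0) (card I))"
  proof (intro sum.cong refl arg_cong2[where f=monom])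
    fix I assume I: "I \<in> ideals \<Omega> leq"
    have IO: "I \<subseteq> \<Omega>" using I unfolding ideals_def by blast
    have mI: "maxs leq I \<subseteq> I" unfolding maxs_def by blast
    define A where "A i = (if i \<in> maxs leq I then carrier (G i) - {\<one>\<^bsub>G i\<^esub>}
       else if i \<in> I then carrier (G i) else {\<one>\<^bsub>G i\<^esub>})" for i
    have one: "\<And>i. i \<in> \<Omega> \<Longrightarrow> \<one>\<^bsub>G i\<^esub> \<in> carrier (G i)"
      using grp group.is_monoid monoid.one_closed by blast
    have setEq: "{\<beta>\<in>H. dcs \<beta> = I} = PiE \<Omega> A"
    proof (rule Set.set_eqI, rule iffI)
      fix \<beta> assume b: "\<beta> \<in> {\<beta>\<in>H. dcs \<beta> = I}"
      then have bH: "\<beta> \<in> PiE \<Omega> (\<lambda>i. carrier (G i))" unfolding H_def prod_carrier_def by blast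
      have "supp_word \<Omega> G \<beta> \<subseteq> I \<and> maxs leq I \<subseteq> supp_word \<Omega> G \<beta>"
        using b dc_eq_iff[OF po fin I, of "supp_word \<Omega> G \<beta>"] unfolding dcs_def supp_word_def by auto
      then show "\<beta> \<in> PiE \<Omega> A" using bH mI IO unfolding A_def supp_word_def PiE_iff by auto
    next
      fix \<beta> assume b: "\<beta> \<in> PiE \<Omega> A"
      have bH: "\<beta> \<in> PiE \<Omega> (\<lambda>i. carrier (G i))" using b one unfolding A_def PiE_iff
        by (auto split: if_splits)
      have "supp_word \<Omega> G \<beta> \<subseteq> I \<and> maxs leq I \<subseteq> supp_word \<Omega> G \<beta>"
        using b mI IO unfolding A_def supp_word_def PiE_iff by (auto split: if_splits)
      then have "dcs \<beta> = I"
        using dc_eq_iff[OF po fin I, of "supp_word \<Omega> G \<beta>"] unfolding dcs_def supp_word_def by auto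
      then show "\<beta> \<in> {\<beta>\<in>H. dcs \<beta> = I}" using bH unfolding H_def prod_carrier_def by blast
    qed
    have finA: "\<And>i. i \<in> \<Omega> \<Longrightarrow> finite (A i)" unfolding A_def using assms(3) by auto
    have "(\<Sum>\<beta>\<in>{\<beta>\<in>H. dcs \<beta> = I}. ce \<beta>) = (\<Prod>i\<in>\<Omega>. \<Sum>x\<in>A i. \<alpha> i x)"
      unfolding setEq ce_def char_eval_def by (rule prod_sum_PiE[symmetric]) (use fin finA in auto)
    also have "\<dots> = (\<Prod>i\<in>\<Omega>. (if i \<in> maxs leq I then (if i \<in> S then -1 else of_nat (card (carrier (G i))) - 1)
          else if i \<in> I then (if i \<in> S then 0 else of_nat (card (carrier (G i)))) else 1))"
    proof (rule prod.cong[OF refl])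
      fix i assume i: "i \<in> \<Omega>"
      have c1: "\<alpha> i \<one>\<^bsub>G i\<^esub> = 1" using char_one grp assms(5) i by blast
      have cs: "(\<Sum>x\<in>carrier (G i). \<alpha> i x) = (if i \<in> S then 0 else of_nat (card (carrier (G i))))"
        using char_sum[OF grp[OF i] assms(3)[OF i] assms(5)[OF i]] i unfolding S_def supp_char_def by auto
      have cs1: "(\<Sum>x\<in>carrier (G i) - {\<one>\<^bsub>G i\<^esub>}. \<alpha> i x) = (\<Sum>x\<in>carrier (G i). \<alpha> i x) - 1"
        using sum_diff1[OF assms(3)[OF i], of "\<alpha> i" "\<one>\<^bsub>G i\<^esub>"] one[OF i] c1 by simp
      show "(\<Sum>x\<in>A i. \<alpha> i x) = (if i \<in> maxs leq I then (if i \<in> S then -1 else of_nat (card (carrier (G i))) - 1)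
          else if i \<in> I then (if i \<in> S then 0 else of_nat (card (carrier (G i)))) else 1)"
        unfolding A_def using cs cs1 c1 by auto
    qed
    also have "\<dots> = (if (I - maxs leq I) \<inter> S = {} then
        (-1) ^ card (maxs leq I \<inter> S)
              * (\<Prod>i\<in>I - maxs leq I. of_nat (card (carrier (G i))))
              * (\<Prod>i\<in>maxs leq I - S. of_nat (card (carrier (G i))) - 1) else 0)"
      (is "prod ?v \<Omega> = _")
    proof -
      have finI: "finite I" using IO fin finite_subset by blast
      have finM: "finite (maxs leq I)" using mI finI finite_subset by blast
      have "prod ?v \<Omega> = prod ?v (\<Omega> - I) * prod ?v I" using prod.subset_diff[OF IO fin] by simp
      also have "prod ?v (\<Omega> - I) = 1" by (rule prod.neutral) (use mI in auto)
      also have "prod ?v I = prod ?v (I - maxs leq I) * prod ?v (maxs leq I)"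
        by (rule prod.subset_diff[OF mI finI])
      also have "prod ?v (maxs leq I) = (\<Prod>i\<in>maxs leq I. if i \<in> S then -1 else of_nat (card (carrier (G i))) - 1)"
        by (rule prod.cong) auto
      also have "\<dots> = (-1) ^ card (maxs leq I \<inter> S) * (\<Prod>i\<in>maxs leq I - S. of_nat (card (carrier (G i))) - 1)"
        using prod.If_cases[OF finM, of "\<lambda>i. i \<in> S" "\<lambda>_. -1"] by (simp add: Diff_eq)
      also have "prod ?v (I - maxs leq I) = (\<Prod>i\<in>I - maxs leq I. if i \<in> S then 0 else of_nat (card (carrier (G i))))"
        by (rule prod.cong) auto
      also have "\<dots> = (if (I - maxs leq I) \<inter> S = {} then (\<Prod>i\<in>I - maxs leq I. of_nat (card (carrier (G i)))) else 0)"
      proof (cases "(I - maxs leq I) \<inter> S = {}")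
        case True
        then show ?thesis by (auto intro!: prod.cong)
      next
        case False
        then obtain j where "j \<in> I - maxs leq I" "j \<in> S" by blast
        then show ?thesis using finI False by (auto simp: prod_zero_iff)
      qed
      finally show ?thesis by simp
    qed
    finally show "(\<Sum>\<beta>\<in>{\<beta>\<in>H. dcs \<beta> = I}. ce \<beta>) = (if (I - maxs leq I) \<inter> S = {} then
        (-1) ^ card (maxs leq I \<inter> S)
              * (\<Prod>i\<in>I - maxs leq I. of_nat (card (carrier (G i))))
              * (\<Prod>i\<in>maxs leq I - S. of_nat (card (carrier (G i))) - 1) else 0)" .
  qed
  also have E: "\<dots> = (\<Sum>I\<in>{I\<in>ideals \<Omega> leq. I \<subseteq> (\<Omega> - D) \<union> mins leq D}.
       monom ((-1) ^ card (I \<inter> D)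
              * (\<Prod>i\<in>I - maxs leq I. of_nat (card (carrier (G i))))
              * (\<Prod>i\<in>maxs leq I - mins leq D. of_nat (card (carrier (G i))) - 1))
             (card I))"
  proof (rule sum.mono_neutral_cong_right[OF finId])
    show "{I\<in>ideals \<Omega> leq. I \<subseteq> (\<Omega> - D) \<union> mins leq D} \<subseteq> ideals \<Omega> leq" by blast
  next
    show "\<forall>I\<in>ideals \<Omega> leq - {I\<in>ideals \<Omega> leq. I \<subseteq> (\<Omega> - D) \<union> mins leq D}.
      monom (if (I - maxs leq I) \<inter> S = {} then
        (-1) ^ card (maxs leq I \<inter> S)
              * (\<Prod>i\<in>I - maxs leq I. of_nat (card (carrier (G i))))
              * (\<Prod>i\<in>maxs leq I - S. of_nat (card (carrier (G i))) - 1) else 0) (card I) = 0"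
      using E1[OF po _ SO Ddef] by auto
  next
    fix I assume I: "I \<in> {I\<in>ideals \<Omega> leq. I \<subseteq> (\<Omega> - D) \<union> mins leq D}"
    note e = E2[OF po _ SO Ddef, of I]
    show "monom (if (I - maxs leq I) \<inter> S = {} then
        (-1) ^ card (maxs leq I \<inter> S)
              * (\<Prod>i\<in>I - maxs leq I. of_nat (card (carrier (G i))))
              * (\<Prod>i\<in>maxs leq I - S. of_nat (card (carrier (G i))) - 1) else 0) (card I) =
       monom ((-1) ^ card (I \<inter> D)
              * (\<Prod>i\<in>I - maxs leq I. of_nat (card (carrier (G i))))
              * (\<Prod>i\<in>maxs leq I - mins leq D. of_nat (card (carrier (G i))) - 1))
             (card I)"
      using e I by simp
  qed
  finally show ?thesis .
qed

end
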